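(* Let $d\ge 1$ and $2\le n_1\le n_2\le\cdots\le n_d$ be integers, and let $G=K_{n_1}\times K_{n_2}\times\cdots\times K_{n_d}$. Then $\sigma_T(G)\le 2d-1$ if $n_1=2$, and $\sigma_T(G)\le 2d$ if $n_1\ge 3$.
   Context: $K_n$ is the complete graph on $n$ vertices and $\times$ is the Cartesian product of graphs. Thus $G$ has vertex set $\{(x_1,\dots,x_d): x_i\in\{0,1,\dots,n_i-1\}\}$, two vertices being adjacent iff they differ in exactly one coordinate (a Hamming graph). For a spanning tree $T$ of a connected graph $G$, $d_T(u,v)$ is the distance between $u$ and $v$ in $T$, $\sigma_T(G,T):=\max_{uv\in E(G)} d_T(u,v)$, and the tree-stretch is $\sigma_T(G):=\min\{\sigma_T(G,T): T \text{ a spanning tree of } G\}$. *)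

theory Defs
  imports Main
begin

text \<open>Simple graphs are given by a vertex set V and a set E of 2-element subsets of V.\<close>

definition walk :: "'a set \<Rightarrow> 'a set set \<Rightarrow> 'a list \<Rightarrow> bool" where
  "walk V E p \<longleftrightarrow> p \<noteq> [] \<and> set p \<subseteq> V \<and>
     (\<forall>i. Suc i < length p \<longrightarrow> {p ! i, p ! Suc i} \<in> E)"

definition connected_graph :: "'a set \<Rightarrow> 'a set set \<Rightarrow> bool" where
  "connected_graph V E \<longleftrightarrow>
     (\<forall>u\<in>V. \<forall>v\<in>V. \<exists>p. walk V E p \<and> hd p = u \<and> last p = v)"

definition is_cycle :: "'a set \<Rightarrow> 'a set set \<Rightarrow> 'a list \<Rightarrow> bool" where
  "is_cycle V E c \<longleftrightarrow> walk V E c \<and> length c \<ge> 3 \<and> distinct c \<and> {last c, hd c} \<in> E"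

definition acyclic_graph :: "'a set \<Rightarrow> 'a set set \<Rightarrow> bool" where
  "acyclic_graph V E \<longleftrightarrow> \<not> (\<exists>c. is_cycle V E c)"

definition is_tree :: "'a set \<Rightarrow> 'a set set \<Rightarrow> bool" where
  "is_tree V E \<longleftrightarrow> connected_graph V E \<and> acyclic_graph V E"

definition spanning_tree :: "'a set \<Rightarrow> 'a set set \<Rightarrow> 'a set set \<Rightarrow> bool" where
  "spanning_tree V E T \<longleftrightarrow> T \<subseteq> E \<and> is_tree V T"

definition gdist :: "'a set \<Rightarrow> 'a set set \<Rightarrow> 'a \<Rightarrow> 'a \<Rightarrow> nat" where
  "gdist V E u v = (LEAST k. \<exists>p. walk V E p \<and> hd p = u \<and> last p = v \<and> length p = Suc k)"

definition stretch :: "'a set \<Rightarrow> 'a set set \<Rightarrow> 'a set set \<Rightarrow> nat" where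
  "stretch V E T = Max {gdist V T u v | u v. {u, v} \<in> E}"

definition tree_stretch :: "'a set \<Rightarrow> 'a set set \<Rightarrow> nat" where
  "tree_stretch V E = Min {stretch V E T | T. spanning_tree V E T}"

text \<open>Hamming graph K_{n_1} x ... x K_{n_d}; ns = [n_1,...,n_d].\<close>
definition hamming_V :: "nat list \<Rightarrow> nat list set" where
  "hamming_V ns = {xs. length xs = length ns \<and> (\<forall>i<length ns. xs ! i < ns ! i)}"

definition hamming_E :: "nat list \<Rightarrow> nat list set set" where
  "hamming_E ns = {{x, y} | x y. x \<in> hamming_V ns \<and> y \<in> hamming_V ns \<and>
      card {i. i < length ns \<and> x ! i \<noteq> y ! i} = 1}"

end

theory Submission
  imports Defs
begin

lemma lazy_walk:
  assumes "q \<noteq> []" "set q \<subseteq> V" "successively (\<lambda>a b. a = b \<or> {a,b} \<in> T) q"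
  shows "\<exists>p. walk V T p \<and> hd p = hd q \<and> last p = last q \<and> length p \<le> length q"
  using assms
proof (induction q rule: induct_list012)
  case 1 then show ?case by simp
next
  case (2 x) then show ?case by (intro exI[of _ "[x]"]) (auto simp: walk_def)
next
  case (3 x y zs)
  then obtain p where p: "walk V T p" "hd p = y" "last p = last (y#zs)" "length p \<le> length (y#zs)"
    by auto
  have pne: "p \<noteq> []" using p(1) by (simp add: walk_def)
  show ?case
  proof (cases "x = y")
    case True
    have "last p = last (x#y#zs)" using p(3) by simp
    moreover have "length p \<le> length (x#y#zs)" using p(4) by simp
    ultimately show ?thesis using p(1,2) True by (intro exI[of _ p]) simp
  next
    case False
    then have e: "{x, hd p} \<in> T" using "3.prems"(3) p(2) by simp
    have "walk V T (x#p)" unfolding walk_def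
    proof (intro conjI allI impI)
      show "set (x#p) \<subseteq> V" using p(1) "3.prems"(2) by (auto simp: walk_def)
      fix i assume "Suc i < length (x#p)"
      then show "{(x#p)!i, (x#p)!Suc i} \<in> T"
      proof (cases i)
        case 0 then show ?thesis using e pne by (simp add: hd_conv_nth)
      next
        case (Suc k)
        have w: "\<forall>i. Suc i < length p \<longrightarrow> {p ! i, p ! Suc i} \<in> T" using p(1) unfolding walk_def by blast
        have "Suc k < length p" using \<open>Suc i < length (x#p)\<close> Suc by simp
        then show ?thesis using w Suc by simp
      qed
    qed simp
    moreover have "last (x#p) = last (x#y#zs)" using p(3) pne by simp
    moreover have "length (x#p) \<le> length (x#y#zs)" using p(4) by simp
    ultimately show ?thesis by (intro exI[of _ "x#p"]) simp
  qed
qed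

lemma gdist_le:
  assumes "walk V T p" "hd p = u" "last p = v"
  shows "gdist V T u v \<le> length p - 1"
proof -
  have "p \<noteq> []" using assms(1) by (simp add: walk_def)
  then have "length p = Suc (length p - 1)" by simp
  then have "\<exists>q. walk V T q \<and> hd q = u \<and> last q = v \<and> length q = Suc (length p - 1)"
    using assms by (intro exI[of _ p]) simp
  then show ?thesis unfolding gdist_def by (rule Least_le)
qed

lemma acyclic_parent:
  fixes rk :: "'a \<Rightarrow> nat"
  assumes orient: "\<And>e. e \<in> T \<Longrightarrow> \<exists>a b. e = {a,b} \<and> P a b"
  and rk: "\<And>a b. P a b \<Longrightarrow> rk a < rk b"
  and uniq: "\<And>a1 a2 b. P a1 b \<Longrightarrow> P a2 b \<Longrightarrow> a1 = a2"
  shows "acyclic_graph V T"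
proof -
  have par: "P y x" if xyT: "{x,y} \<in> T" and xyr: "rk y \<le> rk x" for x y
  proof -
    obtain a b where ab: "{x,y} = {a,b}" "P a b" using orient[OF xyT] by blast
    then have "(x = a \<and> y = b) \<or> (x = b \<and> y = a)" by (simp add: doubleton_eq_iff)
    then show ?thesis using rk[OF ab(2)] xyr ab(2) by auto
  qed
  show ?thesis unfolding acyclic_graph_def
  proof
    assume "\<exists>c. is_cycle V T c"
    then obtain c where c: "walk V T c" "length c \<ge> 3" "distinct c" "{last c, hd c} \<in> T"
      by (auto simp: is_cycle_def)
    define L where "L = length c"
    have cne: "c \<noteq> []" using c(2) by auto
    have step: "{c!j, c!(if Suc j < L then Suc j else 0)} \<in> T" if "j < L" for j
    proof (cases "Suc j < L")
      case True then show ?thesis using c(1) by (simp add: walk_def L_def)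
    next
      case False
      then have "j = L - 1" using that by simp
      then show ?thesis using c(4) False cne by (simp add: L_def last_conv_nth hd_conv_nth)
    qed
    have fin: "finite (rk ` set c)" "rk ` set c \<noteq> {}" using cne by auto
    then have "Max (rk ` set c) \<in> rk ` set c" by (rule Max_in)
    then obtain y where y: "y \<in> set c" "rk y = Max (rk ` set c)" by auto
    then obtain j where j: "j < L" "c!j = y" by (auto simp: in_set_conv_nth L_def)
    have jmax: "rk (c!k) \<le> rk (c!j)" if "k < L" for k
      using that j y fin(1) by (simp add: L_def)
    define n where "n = (if Suc j < L then Suc j else 0)"
    define pv where "pv = (if j = 0 then L - 1 else j - 1)"
    have L3: "L \<ge> 3" using c(2) by (simp add: L_def)
    have pvL: "pv < L" "(if Suc pv < L then Suc pv else 0) = j" using L3 j(1) by (auto simp: pv_def)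
    have nL: "n < L" "n \<noteq> pv" using L3 j(1) by (auto simp: n_def pv_def)
    have e1: "{c!j, c!n} \<in> T" using step[OF j(1)] by (simp add: n_def)
    have e2: "{c!j, c!pv} \<in> T" using step[OF pvL(1)] pvL(2) by (simp add: insert_commute)
    have "c!n = c!pv" using uniq[OF par[OF e1 jmax[OF nL(1)]] par[OF e2 jmax[OF pvL(1)]]] .
    then show False using c(3) nL pvL(1) by (simp add: nth_eq_iff_index_eq L_def)
  qed
qed


definition trunc :: "nat \<Rightarrow> nat list \<Rightarrow> nat list" where
  "trunc j x = map (\<lambda>k. if k < j then x!k else 0) [0..<length x]"

lemma length_trunc[simp]: "length (trunc j x) = length x"
  by (simp add: trunc_def)

lemma nth_trunc[simp]: "k < length x \<Longrightarrow> trunc j x ! k = (if k < j then x!k else 0)"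
  by (simp add: trunc_def)

definition htree :: "nat list \<Rightarrow> nat list set set" where
  "htree ns = {{trunc j x, trunc (Suc j) x} | x j. x \<in> hamming_V ns \<and> j < length ns \<and> x!j \<noteq> 0}"

context
  fixes ns :: "nat list"
  assumes pos: "\<forall>i<length ns. 0 < ns!i"
begin

lemma trunc_V: "x \<in> hamming_V ns \<Longrightarrow> trunc j x \<in> hamming_V ns"
  using pos by (auto simp: hamming_V_def)

lemma trunc_full: "length x = length ns \<Longrightarrow> trunc (length ns) x = x"
  by (intro nth_equalityI) auto

lemma trunc_eq: "length x = length y \<Longrightarrow> \<forall>k<i. x!k = y!k \<Longrightarrow> trunc i x = trunc i y"
  by (intro nth_equalityI) auto

lemma trunc_zero: "x!j = 0 \<Longrightarrow> trunc (Suc j) x = trunc j x"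
  by (intro nth_equalityI) (auto simp: less_Suc_eq)

lemma adj: "x \<in> hamming_V ns \<Longrightarrow> j < length ns \<Longrightarrow>
   trunc j x = trunc (Suc j) x \<or> {trunc j x, trunc (Suc j) x} \<in> htree ns"
  using trunc_zero[of x j] unfolding htree_def by auto

lemma htree_sub: "htree ns \<subseteq> hamming_E ns"
proof
  fix e assume "e \<in> htree ns"
  then obtain x j where xj: "e = {trunc j x, trunc (Suc j) x}" "x \<in> hamming_V ns" "j < length ns" "x!j \<noteq> 0"
    unfolding htree_def by blast
  have lx: "length x = length ns" using xj(2) by (simp add: hamming_V_def)
  have "{i. i < length ns \<and> trunc j x ! i \<noteq> trunc (Suc j) x ! i} = {j}"
    using xj(3,4) lx by (auto simp: less_Suc_eq split: if_splits)
  then have "card {i. i < length ns \<and> trunc j x ! i \<noteq> trunc (Suc j) x ! i} = 1" by simp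
  moreover have "trunc j x \<in> hamming_V ns" "trunc (Suc j) x \<in> hamming_V ns"
    using trunc_V[OF xj(2)] by blast+
  ultimately show "e \<in> hamming_E ns" unfolding hamming_E_def xj(1)
    by (intro CollectI exI[of _ "trunc j x"] exI[of _ "trunc (Suc j) x"]) simp
qed

definition par :: "nat list \<Rightarrow> nat list \<Rightarrow> bool" where
  "par a b \<longleftrightarrow> (\<exists>x j. x \<in> hamming_V ns \<and> j < length ns \<and> x!j \<noteq> 0 \<and> a = trunc j x \<and> b = trunc (Suc j) x)"

definition rk :: "nat list \<Rightarrow> nat" where "rk y = (\<Sum>k<length ns. y!k)"

lemma rk_trunc: "length x = length ns \<Longrightarrow> j \<le> length ns \<Longrightarrow> rk (trunc j x) = (\<Sum>k<j. x!k)"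
proof -
  assume a: "length x = length ns" "j \<le> length ns"
  have "rk (trunc j x) = (\<Sum>k<length ns. if k \<in> {..<j} then x!k else 0)"
    unfolding rk_def using a by (intro sum.cong) auto
  also have "\<dots> = (\<Sum>k\<in>{..<length ns} \<inter> {..<j}. x!k)" by (simp add: sum.inter_restrict)
  also have "{..<length ns} \<inter> {..<j} = {..<j}" using a by auto
  finally show ?thesis .
qed

lemma acyc: "acyclic_graph (hamming_V ns) (htree ns)"
proof (rule acyclic_parent[where P = par and rk = rk])
  fix e assume "e \<in> htree ns" then show "\<exists>a b. e = {a, b} \<and> par a b"
    unfolding htree_def par_def by blast
next
  fix a b assume "par a b"
  then obtain x j where xj: "x \<in> hamming_V ns" "j < length ns" "x!j \<noteq> 0" "a = trunc j x" "b = trunc (Suc j) x"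
    unfolding par_def by blast
  have lx: "length x = length ns" using xj(1) by (simp add: hamming_V_def)
  show "rk a < rk b" using xj lx by (simp add: rk_trunc)
next
  fix a1 a2 b assume "par a1 b" "par a2 b"
  then obtain x1 j1 x2 j2 where
    1: "x1 \<in> hamming_V ns" "j1 < length ns" "x1!j1 \<noteq> 0" "a1 = trunc j1 x1" "b = trunc (Suc j1) x1" and
    2: "x2 \<in> hamming_V ns" "j2 < length ns" "x2!j2 \<noteq> 0" "a2 = trunc j2 x2" "b = trunc (Suc j2) x2"
    unfolding par_def by blast
  have l1: "length x1 = length ns" and l2: "length x2 = length ns"
    using 1(1) 2(1) by (auto simp: hamming_V_def)
  have "b!j1 \<noteq> 0" using 1(2,3,5) l1 by simp
  have "b!j2 \<noteq> 0" using 2(2,3,5) l2 by simp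
  have "\<not> j1 < j2"
  proof
    assume "j1 < j2" then have "b!j2 = 0" using 1(5) 2(2) l1 by simp
    then show False using \<open>b!j2 \<noteq> 0\<close> by simp
  qed
  moreover have "\<not> j2 < j1"
  proof
    assume "j2 < j1" then have "b!j1 = 0" using 2(5) 1(2) l2 by simp
    then show False using \<open>b!j1 \<noteq> 0\<close> by simp
  qed
  ultimately have jj: "j1 = j2" by simp
  have "\<forall>k<j1. x1!k = x2!k"
  proof (intro allI impI)
    fix k assume "k < j1"
    then have "b!k = x1!k" using 1(2,5) l1 by simp
    moreover have "b!k = x2!k" using \<open>k < j1\<close> 2(2,5) l2 jj by simp
    ultimately show "x1!k = x2!k" by simp
  qed
  then show "a1 = a2" using 1(4) 2(4) jj l1 l2 trunc_eq by simp
qed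

lemma succ_upt: "(\<And>j. m \<le> j \<Longrightarrow> Suc j < n \<Longrightarrow> R (f j) (f (Suc j))) \<Longrightarrow> successively R (map f [m..<n])"
  unfolding successively_conv_nth by (auto simp: nth_append)


abbreviation "R \<equiv> (\<lambda>a b. a = b \<or> {a,b} \<in> htree ns)"

lemma adj': "x \<in> hamming_V ns \<Longrightarrow> j < length ns \<Longrightarrow> R (trunc (Suc j) x) (trunc j x)"
  using adj[of x j] by (auto simp: insert_commute)

lemma chain_up: "x \<in> hamming_V ns \<Longrightarrow> successively R (map (\<lambda>j. trunc j x) [i..<Suc (length ns)])"
  by (rule succ_upt) (use adj in auto)

lemma chain_down: "x \<in> hamming_V ns \<Longrightarrow> successively R (rev (map (\<lambda>j. trunc j x) [i..<Suc (length ns)]))"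
  unfolding successively_rev by (rule succ_upt) (use adj' in auto)

lemma conn: "connected_graph (hamming_V ns) (htree ns)"
  unfolding connected_graph_def
proof (intro ballI)
  fix u v assume u: "u \<in> hamming_V ns" and v: "v \<in> hamming_V ns"
  have lu: "length u = length ns" and lv: "length v = length ns" using u v by (auto simp: hamming_V_def)
  define q where "q = rev (map (\<lambda>j. trunc j u) [0..<Suc (length ns)]) @ map (\<lambda>j. trunc j v) [0..<Suc (length ns)]"
  have "trunc 0 u = trunc 0 v" using lu lv by (intro trunc_eq) auto
  moreover have "last (rev (map (\<lambda>j. trunc j u) [0..<Suc (length ns)])) = trunc 0 u"
    by (simp del: upt_Suc add: upt_conv_Cons)
  moreover have "hd (map (\<lambda>j. trunc j v) [0..<Suc (length ns)]) = trunc 0 v"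
    by (simp del: upt_Suc add: upt_conv_Cons)
  ultimately have s: "successively R q" unfolding q_def successively_append_iff
    using chain_up[OF v, of 0] chain_down[OF u, of 0] by (simp del: upt_Suc)
  have tu: "\<And>j. trunc j u \<in> hamming_V ns" by (rule trunc_V[OF u])
  have tv: "\<And>j. trunc j v \<in> hamming_V ns" by (rule trunc_V[OF v])
  have "set q \<subseteq> hamming_V ns" unfolding q_def using tu tv by (simp add: image_subset_iff)
  moreover have "q \<noteq> []" "hd q = u" "last q = v"
    using trunc_full[OF lu] trunc_full[OF lv] by (auto simp: q_def hd_map)
  ultimately obtain p where "walk (hamming_V ns) (htree ns) p" "hd p = u" "last p = v"
    using lazy_walk[OF _ _ s] by metis
  then show "\<exists>p. walk (hamming_V ns) (htree ns) p \<and> hd p = u \<and> last p = v" by blast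
qed

lemma E_V: "{u,v} \<in> hamming_E ns \<Longrightarrow> u \<in> hamming_V ns \<and> v \<in> hamming_V ns
   \<and> card {i. i < length ns \<and> u ! i \<noteq> v ! i} = 1"
proof -
  assume "{u,v} \<in> hamming_E ns"
  then obtain x y where xy: "{u,v} = {x,y}" "x \<in> hamming_V ns" "y \<in> hamming_V ns"
     "card {i. i < length ns \<and> x ! i \<noteq> y ! i} = 1" unfolding hamming_E_def by blast
  then have "(u = x \<and> v = y) \<or> (u = y \<and> v = x)" by (simp add: doubleton_eq_iff)
  moreover have "{i. i < length ns \<and> y ! i \<noteq> x ! i} = {i. i < length ns \<and> x ! i \<noteq> y ! i}" by auto
  ultimately show ?thesis using xy by auto
qed

lemma edge_bound:
  assumes "{u,v} \<in> hamming_E ns" "length ns \<ge> 1"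
  shows "gdist (hamming_V ns) (htree ns) u v \<le> (if ns!0 = 2 then 2 * length ns - 1 else 2 * length ns)"
proof -
  define d where "d = length ns"
  have u: "u \<in> hamming_V ns" and v: "v \<in> hamming_V ns" and c: "card {i. i < d \<and> u ! i \<noteq> v ! i} = 1"
    using E_V[OF assms(1)] by (auto simp: d_def)
  have lu: "length u = d" and lv: "length v = d" using u v by (auto simp: hamming_V_def d_def)
  obtain i where i: "{i. i < d \<and> u ! i \<noteq> v ! i} = {i}" using c card_1_singletonE by blast
  have "i \<in> {i. i < d \<and> u ! i \<noteq> v ! i}" unfolding i by simp
  then have id: "i < d" "u!i \<noteq> v!i" by auto
  have agree: "\<forall>k<i. u!k = v!k"
  proof (intro allI impI)
    fix k assume "k < i"
    then have "k \<notin> {i}" "k < d" using id(1) by auto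
    then have "k \<notin> {i. i < d \<and> u ! i \<noteq> v ! i}" using i by simp
    then show "u!k = v!k" using \<open>k < d\<close> by blast
  qed
  have tuv: "trunc i u = trunc i v" using trunc_eq[OF _ agree] lu lv by simp
  define A where "A = rev (map (\<lambda>j. trunc j u) [Suc i..<Suc d])"
  define B where "B = map (\<lambda>j. trunc j v) [Suc i..<Suc d]"
  define M where "M = (if u!i \<noteq> 0 \<and> v!i \<noteq> 0 then [trunc i u] else [])"
  define q where "q = A @ M @ B"
  have Ane: "A \<noteq> []" and Bne: "B \<noteq> []" using id by (auto simp: A_def B_def)
  have lastA: "last A = trunc (Suc i) u" and hdB: "hd B = trunc (Suc i) v"
    using id by (auto simp del: upt_Suc simp: A_def B_def upt_conv_Cons)
  have sA: "successively R A" using chain_down[OF u] by (simp add: A_def d_def)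
  have sB: "successively R B" using chain_up[OF v] by (simp add: B_def d_def)
  have junc: "successively R (M @ B) \<and> R (last A) (hd (M @ B))"
  proof (cases "u!i \<noteq> 0 \<and> v!i \<noteq> 0")
    case True
    have "R (trunc i v) (trunc (Suc i) v)" using adj[OF v] id(1) by (simp add: d_def)
    moreover have "R (trunc (Suc i) u) (trunc i u)" using adj'[OF u] id(1) by (simp add: d_def)
    ultimately show ?thesis using True sB Bne tuv lastA hdB by (simp add: M_def successively_Cons)
  next
    case False
    then have "u!i = 0 \<or> v!i = 0" by simp
    then have "R (trunc (Suc i) u) (trunc (Suc i) v)"
    proof
      assume "u!i = 0"
      then have "trunc (Suc i) u = trunc i v" using trunc_zero tuv by simp
      then show ?thesis using adj[OF v] id(1) by (simp add: d_def)
    next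
      assume "v!i = 0"
      then have "trunc (Suc i) v = trunc i u" using trunc_zero tuv by simp
      then show ?thesis using adj'[OF u] id(1) by (simp add: d_def)
    qed
    moreover have "M = []" using False by (simp add: M_def)
    ultimately show ?thesis using sB lastA hdB by simp
  qed
  have s: "successively R q" unfolding q_def successively_append_iff[where xs=A] using sA junc Ane by blast
  have tu: "\<And>j. trunc j u \<in> hamming_V ns" by (rule trunc_V[OF u])
  have tv: "\<And>j. trunc j v \<in> hamming_V ns" by (rule trunc_V[OF v])
  have "set A \<subseteq> hamming_V ns" unfolding A_def using tu by (simp add: image_subset_iff)
  moreover have "set B \<subseteq> hamming_V ns" unfolding B_def using tv by (simp add: image_subset_iff)
  moreover have "set M \<subseteq> hamming_V ns"
  proof (cases "u!i \<noteq> 0 \<and> v!i \<noteq> 0")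
    case True
    then have "M = [trunc i u]" by (simp add: M_def)
    then show ?thesis using tu[of i] by simp
  next
    case False
    then have "M = []" by (simp add: M_def)
    then show ?thesis by simp
  qed
  ultimately have sq: "set q \<subseteq> hamming_V ns" unfolding q_def by simp
  have qne: "q \<noteq> []" using Ane by (simp add: q_def)
  have hq: "hd q = u" using Ane id trunc_full[OF lu[unfolded d_def]]
    by (simp add: q_def A_def hd_rev last_map d_def)
  have lsq: "last q = v" using Bne id trunc_full[OF lv[unfolded d_def]]
    by (simp add: q_def B_def last_map d_def)
  obtain p where p0: "walk (hamming_V ns) (htree ns) p" "hd p = hd q" "last p = last q" "length p \<le> length q"
    using lazy_walk[OF qne sq s] by blast
  have p: "walk (hamming_V ns) (htree ns) p" "hd p = u" "last p = v" "length p \<le> length q"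
    using p0 hq lsq by simp_all
  have g: "gdist (hamming_V ns) (htree ns) u v \<le> length q - 1"
    using gdist_le[OF p(1-3)] p(4) by simp
  have lq: "length q = 2 * (d - i) + length M" using id(1) by (simp add: q_def A_def B_def)
  have "length q - 1 \<le> (if ns!0 = 2 then 2 * d - 1 else 2 * d)"
  proof (cases "u!i \<noteq> 0 \<and> v!i \<noteq> 0")
    case True
    have "i = 0 \<longrightarrow> ns!0 \<noteq> 2"
    proof
      assume "i = 0"
      have "0 < length ns" using id(1) unfolding d_def by linarith
      then have "u!0 < ns!0" "v!0 < ns!0" using u v by (auto simp: hamming_V_def)
      then show "ns!0 \<noteq> 2" using True id(2) \<open>i=0\<close> by auto
    qed
    moreover have "length M = 1" using True by (simp add: M_def)
    ultimately have i0: "i = 0 \<longrightarrow> ns!0 \<noteq> 2" and lq1: "length q - 1 = 2*(d-i)" using lq by simp_all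
    show ?thesis
    proof (cases "i = 0")
      case True
      then show ?thesis using i0 lq1 by simp
    next
      case False
      then have "2*(d-i) \<le> 2*d - 1" "2*(d-i) \<le> 2*d" by arith+
      then show ?thesis using lq1 by simp
    qed
  next
    case False
    then have "length M = 0" by (simp add: M_def)
    moreover have "2*(d-i) - 1 \<le> 2*d - 1" "2*(d-i)-1 \<le> 2*d" by arith+
    ultimately show ?thesis using lq by simp
  qed
  with g have "gdist (hamming_V ns) (htree ns) u v \<le> (if ns!0 = 2 then 2 * d - 1 else 2 * d)"
    by (rule le_trans)
  then show ?thesis unfolding d_def .
qed

end

lemma finite_V: "finite (hamming_V ns)"
proof (rule finite_subset)
  show "hamming_V ns \<subseteq> {xs. set xs \<subseteq> {..<sum_list ns} \<and> length xs = length ns}"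
  proof
    fix xs assume "xs \<in> hamming_V ns"
    then have "length xs = length ns" "\<forall>i<length ns. xs!i < ns!i" by (auto simp: hamming_V_def)
    then show "xs \<in> {xs. set xs \<subseteq> {..<sum_list ns} \<and> length xs = length ns}"
      by (auto simp: in_set_conv_nth) (metis elem_le_sum_list order_less_le_trans)
  qed
qed (rule finite_lists_length_eq, simp)


theorem lemma3p1:
  fixes ns :: "nat list" and d :: nat
  assumes "length ns = d" and "d \<ge> 1"
    and "sorted ns" and "\<forall>i<d. 2 \<le> ns ! i"
  shows "(ns ! 0 = 2 \<longrightarrow> tree_stretch (hamming_V ns) (hamming_E ns) \<le> 2 * d - 1)
       \<and> (ns ! 0 \<ge> 3 \<longrightarrow> tree_stretch (hamming_V ns) (hamming_E ns) \<le> 2 * d)"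
proof -
  let ?V = "hamming_V ns" and ?E = "hamming_E ns" and ?T = "htree ns"
  define b where "b = (if ns!0 = 2 then 2 * d - 1 else 2 * d)"
  have pos: "\<forall>i<length ns. 0 < ns!i" using assms(1,4) by auto
  have st: "spanning_tree ?V ?E ?T" unfolding spanning_tree_def is_tree_def
    using htree_sub[OF pos] conn[OF pos] acyc[OF pos] by blast
  define S where "S = {gdist ?V ?T u v | u v. {u,v} \<in> ?E}"
  have "S \<subseteq> (\<lambda>(u,v). gdist ?V ?T u v) ` (?V \<times> ?V)"
  proof
    fix s assume "s \<in> S"
    then obtain u v where uv: "s = gdist ?V ?T u v" "{u,v} \<in> ?E" unfolding S_def by blast
    then have "u \<in> ?V" "v \<in> ?V" using E_V[OF pos uv(2)] by simp_all
    then show "s \<in> (\<lambda>(u,v). gdist ?V ?T u v) ` (?V \<times> ?V)" using uv(1) by force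
  qed
  then have finS: "finite S" using finite_V by (meson finite_SigmaI finite_imageI finite_subset)
  define z where "z = replicate d (0::nat)"
  define z' where "z' = z[0 := 1]"
  have d0: "0 < d" using assms(2) by simp
  have zV: "z \<in> ?V" using assms(1,4) by (auto simp: z_def hamming_V_def)
  have z'V: "z' \<in> ?V" using assms(1,4) d0 by (auto simp: z_def z'_def hamming_V_def nth_list_update)
  have "{i. i < length ns \<and> z ! i \<noteq> z' ! i} = {0}" using assms(1) d0
    by (auto simp: z_def z'_def nth_list_update)
  then have "card {i. i < length ns \<and> z ! i \<noteq> z' ! i} = 1" by simp
  then have "{z,z'} \<in> ?E" unfolding hamming_E_def using zV z'V by blast
  then have Sne: "S \<noteq> {}" unfolding S_def by blast
  have "\<forall>s\<in>S. s \<le> b"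
  proof
    fix s assume "s \<in> S"
    then obtain u v where uv: "s = gdist ?V ?T u v" "{u,v} \<in> ?E" unfolding S_def by blast
    have "1 \<le> length ns" using assms(1,2) by simp
    then show "s \<le> b" using edge_bound[OF pos uv(2)] uv(1) by (cases "ns!0 = 2") (simp_all add: b_def assms(1)[symmetric])
  qed
  then have "Max S \<le> b" using finS Sne by simp
  then have str: "stretch ?V ?E ?T \<le> b" unfolding stretch_def S_def by simp
  have "?E \<subseteq> Pow ?V" unfolding hamming_E_def by blast
  then have finE: "finite ?E" using finite_V by (meson finite_Pow_iff finite_subset)
  have "{stretch ?V ?E T | T. spanning_tree ?V ?E T} \<subseteq> stretch ?V ?E ` Pow ?E"
    unfolding spanning_tree_def by blast
  then have "finite {stretch ?V ?E T | T. spanning_tree ?V ?E T}"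
    using finE by (meson finite_Pow_iff finite_imageI finite_subset)
  moreover have "stretch ?V ?E ?T \<in> {stretch ?V ?E T | T. spanning_tree ?V ?E T}" using st by blast
  ultimately have "tree_stretch ?V ?E \<le> stretch ?V ?E ?T" unfolding tree_stretch_def by (rule Min_le)
  with str have "tree_stretch ?V ?E \<le> b" by simp
  then show ?thesis by (auto simp: b_def)
qed

end
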